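(* Let $t\in\mathbb{R}$ and let $M\in\mathrm{SU}(2,1)$. Suppose that $M$ maps the boundary points $\infty=[1:0:0]$, $0=[0:0:1]$ and $(1,t)=[-\tfrac12+\tfrac{it}{2}:1:1]$ to boundary points with lifts of the form ${}^t(w_{j1},w_{j2},1)$, $j=0,1,2$ (one for each image point). Let $K=\mathbb{Q}(it, w_{jk},\overline{w_{jk}} : j=0,1,2,\ k=1,2)$. Then $M^3\in\mathrm{SU}(2,1,K)$, i.e. all entries of $M^3$ lie in $K$.
   Context: $\mathrm{SU}(2,1)$ is the group of complex $3\times 3$ matrices of determinant $1$ preserving the Hermitian form $\langle z,w\rangle = z_1\overline{w_3}+z_2\overline{w_2}+z_3\overline{w_1}$ on $\mathbb{C}^3$, acting projectively on the boundary of complex hyperbolic plane, namely the projectivization of $\{z\neq0:\langle z,z\rangle=0\}$. For a field $K$, $\mathrm{SU}(2,1,K)$ is the set of elements of $\mathrm{SU}(2,1)$ with all entries in $K$. *)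

theory Defs
  imports "HOL-Analysis.Analysis"
begin

definition herm :: "complex^3 \<Rightarrow> complex^3 \<Rightarrow> complex" where
  "herm z w = z$1 * cnj (w$3) + z$2 * cnj (w$2) + z$3 * cnj (w$1)"

definition SU21 :: "(complex^3^3) set" where
  "SU21 = {M. det M = 1 \<and> (\<forall>z w. herm (M *v z) (M *v w) = herm z w)}"

definition is_subfield :: "complex set \<Rightarrow> bool" where
  "is_subfield F \<longleftrightarrow> 0 \<in> F \<and> 1 \<in> F \<and>
     (\<forall>x\<in>F. \<forall>y\<in>F. x + y \<in> F \<and> x * y \<in> F) \<and>
     (\<forall>x\<in>F. - x \<in> F) \<and> (\<forall>x\<in>F. x \<noteq> 0 \<longrightarrow> inverse x \<in> F)"

definition gen_field :: "complex set \<Rightarrow> complex set" where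
  "gen_field S = \<Inter>{F. is_subfield F \<and> S \<subseteq> F}"

definition SU21_over :: "complex set \<Rightarrow> (complex^3^3) set" where
  "SU21_over K = {M \<in> SU21. \<forall>i j. M$i$j \<in> K}"

definition is_lift :: "complex^3 \<Rightarrow> complex^3 \<Rightarrow> bool" where
  "is_lift v p \<longleftrightarrow> (\<exists>c. c \<noteq> 0 \<and> v = c *s p)"

end

theory Submission
  imports Defs
begin

lemma sf_add: "is_subfield F \<Longrightarrow> x \<in> F \<Longrightarrow> y \<in> F \<Longrightarrow> x + y \<in> F"
  unfolding is_subfield_def by blast
lemma sf_mult: "is_subfield F \<Longrightarrow> x \<in> F \<Longrightarrow> y \<in> F \<Longrightarrow> x * y \<in> F"
  unfolding is_subfield_def by blast
lemma sf_uminus: "is_subfield F \<Longrightarrow> x \<in> F \<Longrightarrow> - x \<in> F"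
  unfolding is_subfield_def by blast
lemma sf_0: "is_subfield F \<Longrightarrow> 0 \<in> F"
  unfolding is_subfield_def by blast
lemma sf_1: "is_subfield F \<Longrightarrow> 1 \<in> F"
  unfolding is_subfield_def by blast
lemma sf_inverse: "is_subfield F \<Longrightarrow> x \<in> F \<Longrightarrow> inverse x \<in> F"
  unfolding is_subfield_def by (cases "x = 0") auto
lemma sf_diff: "is_subfield F \<Longrightarrow> x \<in> F \<Longrightarrow> y \<in> F \<Longrightarrow> x - y \<in> F"
  using sf_add sf_uminus by (metis diff_conv_add_uminus)
lemma sf_divide: "is_subfield F \<Longrightarrow> x \<in> F \<Longrightarrow> y \<in> F \<Longrightarrow> x / y \<in> F"
  using sf_mult sf_inverse by (metis divide_inverse)
lemma sf_power: "is_subfield F \<Longrightarrow> x \<in> F \<Longrightarrow> x ^ n \<in> F"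
  by (induction n) (auto intro: sf_mult sf_1)
lemma sf_2: "is_subfield F \<Longrightarrow> 2 \<in> F"
  using sf_add[OF _ sf_1 sf_1] by (metis one_add_one)

lemma gen_field_sf: "is_subfield (gen_field S)"
  unfolding gen_field_def is_subfield_def by auto

lemma gen_field_sub: "S \<subseteq> gen_field S"
  unfolding gen_field_def by auto

lemma gen_field_cnj:
  assumes "\<And>x. x \<in> S \<Longrightarrow> cnj x \<in> gen_field S" and "x \<in> gen_field S"
  shows "cnj x \<in> gen_field S"
proof -
  let ?F = "{x. cnj x \<in> gen_field S}"
  have sf: "is_subfield ?F"
    using gen_field_sf[of S] unfolding is_subfield_def
    by auto
  have "S \<subseteq> ?F" using assms(1) by auto
  hence "gen_field S \<subseteq> ?F" using sf unfolding gen_field_def by blast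
  thus ?thesis using assms(2) by auto
qed

lemma herm_scale: "herm (c *s X) (d *s Y) = c * cnj d * herm X Y"
  unfolding herm_def by (simp add: algebra_simps)

lemma mult_SU21: "A \<in> SU21 \<Longrightarrow> B \<in> SU21 \<Longrightarrow> A ** B \<in> SU21"
  unfolding SU21_def by (auto simp: det_mul matrix_vector_mul_assoc[symmetric])

lemma scal_mult: "(\<chi> i j. (c::complex) * (A::complex^3^3)$i$j) ** (\<chi> i j. d * B$i$j) = (\<chi> i j. (c*d) * (A**B)$i$j)"
  apply (simp add: vec_eq_iff matrix_matrix_mult_def sum_distrib_left)
  apply (intro allI sum.cong refl)
  by (simp add: mult_ac)

lemma mult_in: "is_subfield F \<Longrightarrow> \<forall>i j. (A::complex^3^3)$i$j \<in> F \<Longrightarrow> \<forall>i j. (B::complex^3^3)$i$j \<in> F \<Longrightarrow> \<forall>i j. (A**B)$i$j \<in> F"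
  by (simp add: matrix_matrix_mult_def sum_3 sf_add sf_mult)

lemma mv3: "((M::complex^3^3) *v v) $ k = M$k$1 * v$1 + M$k$2 * v$2 + M$k$3 * v$3"
  by (simp add: matrix_vector_mult_def sum_3)

lemma l1: fixes c0 x y :: complex assumes "c0 * x * u = 1" "c0 * y * v = 1" "x \<noteq> 0" "u \<noteq> 0" "v \<noteq> 0"
  shows "y / x = u / v"
proof -
  have "c0 * (x * u) = c0 * (y * v)" using assms(1,2) by (simp add: mult.assoc)
  hence "x * u = y * v" using assms(1) by auto
  thus ?thesis using assms(3,5) by (simp add: frac_eq_eq mult.commute)
qed
lemma l2: fixes c1 d h a :: complex assumes "c1 * cnj (c1 * d) * h = a" "h \<noteq> 0" "d \<noteq> 0"
  shows "c1 * cnj c1 = (a / h) / cnj d"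
  using assms by (auto simp: field_simps)
lemma l3: fixes c0 c1 h :: complex assumes "c0 * cnj c1 * h = 1" "c1 \<noteq> 0"
  shows "c0 / c1 = 1 / (h * (c1 * cnj c1))"
proof -
  have nz: "h * cnj c1 \<noteq> 0" using assms(1) by auto
  have "c0 = 1 / (h * cnj c1)" using assms(1) nz by (simp add: eq_divide_eq mult.commute mult.left_commute)
  thus ?thesis using assms(2) by simp
qed

theorem mainTheorem4:
  fixes t :: real and M :: "complex^3^3" and w :: "nat \<Rightarrow> nat \<Rightarrow> complex"
  assumes "M \<in> SU21"
    and "is_lift (M *v vector [1, 0, 0]) (vector [w 0 1, w 0 2, 1])"
    and "is_lift (M *v vector [0, 0, 1]) (vector [w 1 1, w 1 2, 1])"
    and "is_lift (M *v vector [- 1/2 + \<i> * of_real t / 2, 1, 1]) (vector [w 2 1, w 2 2, 1])"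
  shows "M ** M ** M \<in> SU21_over
           (gen_field ({\<i> * of_real t} \<union> {w j k | j k. j < 3 \<and> k \<in> {1, 2}}
                        \<union> {cnj (w j k) | j k. j < 3 \<and> k \<in> {1, 2}}))"
proof -
  define S where "S = ({\<i> * of_real t} \<union> {w j k | j k. j < 3 \<and> k \<in> {1, 2}}
                        \<union> {cnj (w j k) | j k. j < 3 \<and> k \<in> {1, 2}})"
  define K where "K = gen_field S"
  have sf: "is_subfield K" unfolding K_def by (rule gen_field_sf)
  have cnjK: "cnj x \<in> K" if "x \<in> K" for x
    unfolding K_def
  proof (rule gen_field_cnj)
    show "x \<in> gen_field S" using that K_def by simp
    fix y assume yS: "y \<in> S"
    have tS: "\<i> * of_real t \<in> S" unfolding S_def by blast
    have GS: "S \<subseteq> gen_field S" by (rule gen_field_sub)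
    have sfG: "is_subfield (gen_field S)" by (rule gen_field_sf)
    have disj: "y = \<i> * of_real t \<or> (\<exists>j k. j<3 \<and> k\<in>{1::nat,2} \<and> y = w j k)
       \<or> (\<exists>j k. j<3 \<and> k\<in>{1::nat,2} \<and> y = cnj (w j k))"
      using yS unfolding S_def by blast
    have r1: "cnj y \<in> gen_field S" if "y = \<i> * of_real t"
    proof -
      have "cnj y = - (\<i> * of_real t)" using that by simp
      thus ?thesis using sf_uminus[OF sfG] tS GS by auto
    qed
    have r2: "cnj y \<in> gen_field S" if "j<3" "k\<in>{1::nat,2}" "y = w j k" for j k
    proof -
      have "cnj y \<in> S" unfolding S_def using that by blast
      thus ?thesis using GS by auto
    qed
    have r3: "cnj y \<in> gen_field S" if "j<3" "k\<in>{1::nat,2}" "y = cnj (w j k)" for j k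
    proof -
      have "cnj y \<in> S" unfolding S_def using that by simp blast
      thus ?thesis using GS by auto
    qed
    show "cnj y \<in> gen_field S" using disj r1 r2 r3 by blast
  qed
  have wK: "w j k \<in> K" if "j < 3" "k \<in> {1,2}" for j k
    using gen_field_sub[of S] that unfolding K_def S_def by blast
  have w01: "w 0 1 \<in> K" and w02: "w 0 2 \<in> K" and w11: "w 1 1 \<in> K" and w12: "w 1 2 \<in> K"
    and w21: "w 2 1 \<in> K" and w22: "w 2 2 \<in> K" by (auto intro: wK)
  have tK: "\<i> * of_real t \<in> K"
    using gen_field_sub[of S] unfolding K_def S_def by blast
  define a where "a = - 1/2 + \<i> * of_real t / 2"
  have aK: "a \<in> K" unfolding a_def
    using sf_add[OF sf sf_uminus[OF sf sf_divide[OF sf sf_1[OF sf] sf_2[OF sf]]]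
       sf_divide[OF sf tK sf_2[OF sf]]] by simp
  obtain c0 where c0: "c0 \<noteq> 0" "M *v vector [1, 0, 0] = c0 *s vector [w 0 1, w 0 2, 1]"
    using assms(2) unfolding is_lift_def by blast
  obtain c1 where c1: "c1 \<noteq> 0" "M *v vector [0, 0, 1] = c1 *s vector [w 1 1, w 1 2, 1]"
    using assms(3) unfolding is_lift_def by blast
  obtain c2 where c2: "c2 \<noteq> 0" "M *v vector [a, 1, 1] = c2 *s vector [w 2 1, w 2 2, 1]"
    using assms(4) unfolding is_lift_def a_def by blast
  have hyp: "herm (M *v z) (M *v v) = herm z v" for z v
    using assms(1) unfolding SU21_def by blast
  have E1: "c0 * cnj c1 * herm (vector [w 0 1, w 0 2, 1]) (vector [w 1 1, w 1 2, 1]) = 1"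
    using hyp[of "vector [1, 0, 0]" "vector [0, 0, 1]"] c0 c1
    unfolding c0(2) c1(2) c2(2) herm_scale by (simp add: herm_def)
  have E2: "c0 * cnj c2 * herm (vector [w 0 1, w 0 2, 1]) (vector [w 2 1, w 2 2, 1]) = 1"
    using hyp[of "vector [1, 0, 0]" "vector [a, 1, 1]"] c0 c2
    unfolding c0(2) c1(2) c2(2) herm_scale by (simp add: herm_def)
  have E3: "c1 * cnj c2 * herm (vector [w 1 1, w 1 2, 1]) (vector [w 2 1, w 2 2, 1]) = cnj a"
    using hyp[of "vector [0, 0, 1]" "vector [a, 1, 1]"] c1 c2
    unfolding c0(2) c1(2) c2(2) herm_scale by (simp add: herm_def)
  define h01 where "h01 = herm (vector [w 0 1, w 0 2, 1]) (vector [w 1 1, w 1 2, 1])"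
  define h02 where "h02 = herm (vector [w 0 1, w 0 2, 1]) (vector [w 2 1, w 2 2, 1])"
  define h12 where "h12 = herm (vector [w 1 1, w 1 2, 1]) (vector [w 2 1, w 2 2, 1])"
  have h01K: "h01 \<in> K" unfolding h01_def herm_def vector_3
    by (intro sf_add[OF sf] sf_mult[OF sf] cnjK w01 w02 w11 w12 sf_1[OF sf])
  have h02K: "h02 \<in> K" unfolding h02_def herm_def vector_3
    by (intro sf_add[OF sf] sf_mult[OF sf] cnjK w01 w02 w21 w22 sf_1[OF sf])
  have h12K: "h12 \<in> K" unfolding h12_def herm_def vector_3
    by (intro sf_add[OF sf] sf_mult[OF sf] cnjK w11 w12 w21 w22 sf_1[OF sf])
  note E1 = E1[folded h01_def] and E2 = E2[folded h02_def] and E3 = E3[folded h12_def]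
  have hnz: "h01 \<noteq> 0" "h02 \<noteq> 0" using E1 E2 by auto
  define r2 where "r2 = c2 / c1"
  define r0 where "r0 = c0 / c1"
  have "cnj r2 = h01 / h02" using l1[OF E1 E2] c1 hnz unfolding r2_def by simp
  hence "cnj r2 \<in> K" using sf_divide[OF sf h01K h02K] by simp
  hence r2K: "r2 \<in> K" using cnjK by fastforce
  have anz: "cnj a \<noteq> 0" unfolding a_def
    by (auto simp: complex_eq_iff)
  have h12nz: "h12 \<noteq> 0" using E3 anz by auto
  have r2nz: "r2 \<noteq> 0" using c1 c2 unfolding r2_def by simp
  have E3': "c1 * cnj (c1 * r2) * h12 = cnj a" using E3 c1(1) unfolding r2_def by simp
  have nK: "c1 * cnj c1 \<in> K"
    unfolding l2[OF E3' h12nz r2nz]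
    by (rule sf_divide[OF sf sf_divide[OF sf cnjK[OF aK] h12K] cnjK[OF r2K]])
  have r0K: "r0 \<in> K" unfolding r0_def l3[OF E1 c1(1)]
    by (rule sf_divide[OF sf sf_1[OF sf] sf_mult[OF sf h01K nK]])
  have col0: "M$1$1 = c0 * w 0 1" "M$2$1 = c0 * w 0 2" "M$3$1 = c0"
    using arg_cong[OF c0(2), of "\<lambda>v. v$1"] arg_cong[OF c0(2), of "\<lambda>v. v$2"]
      arg_cong[OF c0(2), of "\<lambda>v. v$3"] by (simp_all add: mv3)
  have col1: "M$1$3 = c1 * w 1 1" "M$2$3 = c1 * w 1 2" "M$3$3 = c1"
    using arg_cong[OF c1(2), of "\<lambda>v. v$1"] arg_cong[OF c1(2), of "\<lambda>v. v$2"]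
      arg_cong[OF c1(2), of "\<lambda>v. v$3"] by (simp_all add: mv3)
  have col2: "M$1$2 = c2 * w 2 1 - a * M$1$1 - M$1$3" "M$2$2 = c2 * w 2 2 - a * M$2$1 - M$2$3"
     "M$3$2 = c2 - a * M$3$1 - M$3$3"
    using arg_cong[OF c2(2), of "\<lambda>v. v$1"] arg_cong[OF c2(2), of "\<lambda>v. v$2"]
      arg_cong[OF c2(2), of "\<lambda>v. v$3"] by (simp_all add: mv3 algebra_simps)
  define N where "N = (\<chi> i j. M$i$j / c1)"
  have MN: "M = (\<chi> i j. c1 * N$i$j)"
    using c1(1) by (simp add: vec_eq_iff N_def)
  have c0e: "c0 = c1 * r0" and c2e: "c2 = c1 * r2" using c1(1) unfolding r0_def r2_def by simp_all
  have Ne: "N$i$j = M$i$j / c1" for i j unfolding N_def by simp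
  have n1: "N$1$1 = r0 * w 0 1" "N$2$1 = r0 * w 0 2" "N$3$1 = r0"
    unfolding Ne col0 c0e using c1(1) by simp_all
  have n3: "N$1$3 = w 1 1" "N$2$3 = w 1 2" "N$3$3 = 1"
    unfolding Ne col1 using c1(1) by simp_all
  have n2: "N$1$2 = r2 * w 2 1 - a * N$1$1 - N$1$3" "N$2$2 = r2 * w 2 2 - a * N$2$1 - N$2$3"
     "N$3$2 = r2 - a * N$3$1 - N$3$3"
    unfolding Ne col2 c2e using c1(1) by (simp_all add: diff_divide_distrib)
  have NK: "\<forall>i j. N$i$j \<in> K"
    unfolding forall_3 n2 unfolding n1 n3
    by (intro conjI sf_add[OF sf] sf_mult[OF sf] sf_diff[OF sf] r0K r2K aK sf_1[OF sf]
        w01 w02 w11 w12 w21 w22)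
  have detN: "det N \<in> K"
    using NK unfolding det_3 by (simp add: sf sf_add sf_mult sf_diff)
  have "det M = c1^3 * det N"
    unfolding MN det_3 by (simp add: algebra_simps power3_eq_cube)
  hence "c1^3 * det N = 1" using assms(1) unfolding SU21_def by simp
  hence c13: "c1^3 = 1 / det N"
  proof -
    assume h: "c1^3 * det N = 1"
    hence "det N \<noteq> 0" by auto
    thus ?thesis using h by (simp add: eq_divide_eq)
  qed
  have c13K: "c1^3 \<in> K" unfolding c13 by (rule sf_divide[OF sf sf_1[OF sf] detN])
  have M3: "M ** M ** M = (\<chi> i j. c1^3 * (N ** N ** N)$i$j)"
    unfolding MN scal_mult by (simp add: power3_eq_cube mult.assoc)
  have N3: "\<forall>i j. (N ** N ** N)$i$j \<in> K"
    using mult_in[OF sf mult_in[OF sf NK NK] NK] .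
  have entries: "\<forall>i j. (M ** M ** M)$i$j \<in> K"
    unfolding M3 using N3 c13K sf_mult[OF sf] by simp
  have "M ** M ** M \<in> SU21" using assms(1) by (intro mult_SU21)
  thus ?thesis using entries unfolding SU21_over_def K_def S_def by simp
qed

end
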